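(* There is an absolute constant $C$ such that for every prime power $q$, every $0<\varepsilon<1$, and every (unweighted) linear code $\mathcal{C}\subseteq\mathbb{F}_q^n$ of dimension $k \ge 1$, $\mathcal{C}$ has a $(1\pm\varepsilon)$-sparsifier of size at most $C k^2 \log_2(q)/\varepsilon^2$. Moreover, one such sparsifier is obtained with positive probability as follows: for each coordinate $i$ in the support of $\mathcal{C}$ let $w_i = \min\{\mathrm{wt}(c) : c\in\mathcal{C}, c_i\neq 0\}$, and sample coordinate $i$ independently with probability $p_i=\min(1, 10 k\log_2(q)/(\varepsilon^2 w_i))$, assigning weight $1/p_i$ if sampled.
   Context: $\mathrm{wt}(c)$ is the number of nonzero coordinates. The support of $\mathcal{C}$ is the set of coordinates $i$ such that some codeword is nonzero at $i$. A $(1\pm\varepsilon)$-sparsifier of size $s$ is a set $S\subseteq[n]$, $|S|\le s$, with nonnegative weights $(w'_i)_{i\in S}$ such that $(1-\varepsilon)\mathrm{wt}(v)\le\sum_{i\in S:v_i\neq0}w'_i\le(1+\varepsilon)\mathrm{wt}(v)$ for all $v\in\mathcal{C}$. *)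

theory Defs
  imports "HOL-Algebra.Ring" "HOL-Probability.Product_PMF"
begin

text \<open>Finite fields are represented as HOL-Algebra fields whose carrier is a finite set
of natural numbers (every finite field is isomorphic to such a one); this lets the constant
C be quantified before the field.\<close>

definition vecs :: "nat ring \<Rightarrow> nat \<Rightarrow> (nat \<Rightarrow> nat) set" where
  "vecs R n = {v. (\<forall>i<n. v i \<in> carrier R) \<and> (\<forall>i. n \<le> i \<longrightarrow> v i = \<zero>\<^bsub>R\<^esub>)}"

definition zero_vec :: "nat ring \<Rightarrow> nat \<Rightarrow> nat \<Rightarrow> nat" where
  "zero_vec R n = (\<lambda>i. \<zero>\<^bsub>R\<^esub>)"

definition vadd :: "nat ring \<Rightarrow> nat \<Rightarrow> (nat \<Rightarrow> nat) \<Rightarrow> (nat \<Rightarrow> nat) \<Rightarrow> nat \<Rightarrow> nat" where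
  "vadd R n u v = (\<lambda>i. if i < n then u i \<oplus>\<^bsub>R\<^esub> v i else \<zero>\<^bsub>R\<^esub>)"

definition smult_vec :: "nat ring \<Rightarrow> nat \<Rightarrow> nat \<Rightarrow> (nat \<Rightarrow> nat) \<Rightarrow> nat \<Rightarrow> nat" where
  "smult_vec R n a v = (\<lambda>i. if i < n then a \<otimes>\<^bsub>R\<^esub> v i else \<zero>\<^bsub>R\<^esub>)"

definition linear_code :: "nat ring \<Rightarrow> nat \<Rightarrow> (nat \<Rightarrow> nat) set \<Rightarrow> bool" where
  "linear_code R n Cd \<longleftrightarrow> Cd \<subseteq> vecs R n \<and> zero_vec R n \<in> Cd \<and>
     (\<forall>u\<in>Cd. \<forall>v\<in>Cd. vadd R n u v \<in> Cd) \<and>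
     (\<forall>a\<in>carrier R. \<forall>v\<in>Cd. smult_vec R n a v \<in> Cd)"

definition lin_comb :: "nat ring \<Rightarrow> nat \<Rightarrow> nat \<Rightarrow> (nat \<Rightarrow> nat) \<Rightarrow> (nat \<Rightarrow> nat \<Rightarrow> nat) \<Rightarrow> nat \<Rightarrow> nat" where
  "lin_comb R n k a b = (\<lambda>i. if i < n then finsum R (\<lambda>j. a j \<otimes>\<^bsub>R\<^esub> b j i) {..<k} else \<zero>\<^bsub>R\<^esub>)"

definition code_dim :: "nat ring \<Rightarrow> nat \<Rightarrow> (nat \<Rightarrow> nat) set \<Rightarrow> nat \<Rightarrow> bool" where
  "code_dim R n Cd k \<longleftrightarrow> (\<exists>b. (\<forall>j<k. b j \<in> Cd) \<and>
     Cd = {lin_comb R n k a b | a. \<forall>j<k. a j \<in> carrier R} \<and>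
     (\<forall>a. (\<forall>j<k. a j \<in> carrier R) \<longrightarrow> lin_comb R n k a b = zero_vec R n \<longrightarrow> (\<forall>j<k. a j = \<zero>\<^bsub>R\<^esub>)))"

definition wt :: "nat ring \<Rightarrow> nat \<Rightarrow> (nat \<Rightarrow> nat) \<Rightarrow> nat" where
  "wt R n v = card {i. i < n \<and> v i \<noteq> \<zero>\<^bsub>R\<^esub>}"

definition code_support :: "nat ring \<Rightarrow> nat \<Rightarrow> (nat \<Rightarrow> nat) set \<Rightarrow> nat set" where
  "code_support R n Cd = {i. i < n \<and> (\<exists>c\<in>Cd. c i \<noteq> \<zero>\<^bsub>R\<^esub>)}"

definition is_sparsifier :: "nat ring \<Rightarrow> nat \<Rightarrow> (nat \<Rightarrow> nat) set \<Rightarrow> real \<Rightarrow> real \<Rightarrow> nat set \<Rightarrow> (nat \<Rightarrow> real) \<Rightarrow> bool" where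
  "is_sparsifier R n Cd eps s S w' \<longleftrightarrow> S \<subseteq> {..<n} \<and> real (card S) \<le> s \<and>
     (\<forall>i\<in>S. 0 \<le> w' i) \<and>
     (\<forall>v\<in>Cd. (1 - eps) * real (wt R n v) \<le> (\<Sum>i\<in>{i\<in>S. v i \<noteq> \<zero>\<^bsub>R\<^esub>}. w' i) \<and>
             (\<Sum>i\<in>{i\<in>S. v i \<noteq> \<zero>\<^bsub>R\<^esub>}. w' i) \<le> (1 + eps) * real (wt R n v))"

definition min_wt :: "nat ring \<Rightarrow> nat \<Rightarrow> (nat \<Rightarrow> nat) set \<Rightarrow> nat \<Rightarrow> nat" where
  "min_wt R n Cd i = Min (wt R n ` {c\<in>Cd. c i \<noteq> \<zero>\<^bsub>R\<^esub>})"

definition samp_prob :: "nat ring \<Rightarrow> nat \<Rightarrow> (nat \<Rightarrow> nat) set \<Rightarrow> nat \<Rightarrow> real \<Rightarrow> nat \<Rightarrow> real" where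
  "samp_prob R n Cd k eps i =
     min 1 (10 * real k * log 2 (real (card (carrier R))) / (eps\<^sup>2 * real (min_wt R n Cd i)))"

definition sample_pmf :: "nat ring \<Rightarrow> nat \<Rightarrow> (nat \<Rightarrow> nat) set \<Rightarrow> nat \<Rightarrow> real \<Rightarrow> nat set pmf" where
  "sample_pmf R n Cd k eps =
     map_pmf (\<lambda>f. {i\<in>code_support R n Cd. f i})
       (Pi_pmf (code_support R n Cd) False (\<lambda>i. bernoulli_pmf (samp_prob R n Cd k eps i)))"

end

theory Submission
  imports Defs
begin

lemma exp_le_quad:
  fixes x :: real assumes "\<bar>x\<bar> \<le> 1" shows "exp x \<le> 1 + x + x\<^sup>2"
proof (cases "0 \<le> x")
  case True thus ?thesis using exp_bound assms by auto
next
  case False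
  define y where "y = - x"
  have y: "0 < y" "y \<le> 1" using False assms by (auto simp: y_def)
  have e1: "1 + y + y\<^sup>2 / 2 \<le> exp y" using exp_lower_Taylor_quadratic y by auto
  have pos: "0 < 1 - y + y\<^sup>2" using y by (smt (verit) power2_eq_square mult_pos_pos)
  have "1 \<le> (1 + y + y\<^sup>2 / 2) * (1 - y + y\<^sup>2)"
  proof -
    have "(1 + y + y\<^sup>2 / 2) * (1 - y + y\<^sup>2) = 1 + y\<^sup>2/2 + y^3/2 + y^4/2"
      by (simp add: power2_eq_square power3_eq_cube power4_eq_xxxx field_simps)
    thus ?thesis using y by simp
  qed
  also have "\<dots> \<le> exp y * (1 - y + y\<^sup>2)" using e1 pos by (intro mult_right_mono) auto
  finally have "1 / exp y \<le> 1 - y + y\<^sup>2" by (simp add: field_simps)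
  thus ?thesis by (simp add: y_def exp_minus field_simps power2_eq_square)
qed

definition Xs :: "nat set \<Rightarrow> (nat \<Rightarrow> real) \<Rightarrow> (nat \<Rightarrow> bool) \<Rightarrow> real" where
  "Xs T p f = (\<Sum>i\<in>T. if f i then 1 / p i else 0)"

lemma Pi_bern_fin: "finite A \<Longrightarrow> finite (set_pmf (Pi_pmf A False (\<lambda>i. bernoulli_pmf (p i))))"
  by (rule finite_subset[OF set_Pi_pmf_subset']) auto

lemma mgf:
  fixes A T :: "nat set" and p :: "nat \<Rightarrow> real" and lam M :: real
  assumes fA: "finite A" and TA: "T \<subseteq> A"
    and p01: "\<And>i. i \<in> A \<Longrightarrow> 0 \<le> p i \<and> p i \<le> 1"
    and pT: "\<And>i. i \<in> T \<Longrightarrow> 0 < p i \<and> 1 / p i \<le> M"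
    and lam: "\<bar>lam\<bar> * M \<le> 1"
  shows "measure_pmf.expectation (Pi_pmf A False (\<lambda>i. bernoulli_pmf (p i))) (\<lambda>f. exp (lam * Xs T p f))
           \<le> exp (real (card T) * (lam + lam\<^sup>2 * M))"
proof -
  define h where "h i b = (if i \<in> T \<and> b then exp (lam / p i) else 1)" for i b
  have fT: "finite T" using fA TA finite_subset by blast
  have eq: "exp (lam * Xs T p f) = (\<Prod>i\<in>A. h i (f i))" for f
  proof -
    have "exp (lam * Xs T p f) = (\<Prod>i\<in>T. exp (lam * (if f i then 1 / p i else 0)))"
      unfolding Xs_def sum_distrib_left using exp_sum[OF fT] by simp
    also have "\<dots> = (\<Prod>i\<in>T. h i (f i))" by (intro prod.cong) (auto simp: h_def)
    also have "\<dots> = (\<Prod>i\<in>A. h i (f i))"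
      using TA fA by (intro prod.mono_neutral_left) (auto simp: h_def)
    finally show ?thesis .
  qed
  have "measure_pmf.expectation (Pi_pmf A False (\<lambda>i. bernoulli_pmf (p i))) (\<lambda>f. exp (lam * Xs T p f))
      = measure_pmf.expectation (Pi_pmf A False (\<lambda>i. bernoulli_pmf (p i))) (\<lambda>f. \<Prod>i\<in>A. h i (f i))"
    by (simp add: eq)
  also have "\<dots> = (\<Prod>i\<in>A. measure_pmf.expectation (bernoulli_pmf (p i)) (h i))"
    using fA by (intro expectation_prod_Pi_pmf integrable_measure_pmf_finite)
      (auto simp: h_def)
  also have "\<dots> = (\<Prod>i\<in>T. measure_pmf.expectation (bernoulli_pmf (p i)) (h i))"
  proof (rule prod.mono_neutral_right[OF fA TA], rule ballI)
    fix i assume i: "i \<in> A - T"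
    thus "measure_pmf.expectation (bernoulli_pmf (p i)) (h i) = 1"
      using p01[of i] by (simp add: h_def)
  qed
  also have "\<dots> \<le> (\<Prod>i\<in>T. exp (lam + lam\<^sup>2 * M))"
  proof (rule prod_mono, rule conjI)
    fix i assume i: "i \<in> T"
    have pi: "0 < p i" "p i \<le> 1" "1 / p i \<le> M" using pT[OF i] p01[of i] TA i by auto
    have E: "measure_pmf.expectation (bernoulli_pmf (p i)) (h i) = exp (lam / p i) * p i + (1 - p i)"
      using pi i by (simp add: h_def)
    show "0 \<le> measure_pmf.expectation (bernoulli_pmf (p i)) (h i)"
      unfolding E using pi by (intro add_nonneg_nonneg mult_nonneg_nonneg) auto
    have ax: "\<bar>lam / p i\<bar> \<le> 1"
    proof -
      have "\<bar>lam / p i\<bar> = \<bar>lam\<bar> * (1 / p i)" using pi by (simp add: abs_divide)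
      also have "\<dots> \<le> \<bar>lam\<bar> * M" using pi by (intro mult_left_mono) auto
      finally show ?thesis using lam by simp
    qed
    have "exp (lam / p i) * p i + (1 - p i) \<le> (1 + lam / p i + (lam / p i)\<^sup>2) * p i + (1 - p i)"
      using exp_le_quad[OF ax] pi by (intro add_right_mono mult_right_mono) auto
    also have "\<dots> = 1 + lam + lam\<^sup>2 * (1 / p i)"
      using pi by (simp add: field_simps power2_eq_square)
    also have "\<dots> \<le> 1 + lam + lam\<^sup>2 * M" using pi by (intro add_left_mono mult_left_mono) auto
    also have "\<dots> \<le> exp (lam + lam\<^sup>2 * M)" using exp_ge_add_one_self[of "lam + lam\<^sup>2 * M"] by (simp add: add.assoc)
    finally show "measure_pmf.expectation (bernoulli_pmf (p i)) (h i) \<le> exp (lam + lam\<^sup>2 * M)"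
      using E by simp
  qed
  also have "\<dots> = exp (real (card T) * (lam + lam\<^sup>2 * M))"
    by (simp add: exp_of_nat_mult)
  finally show ?thesis .
qed

lemma tails:
  fixes A T :: "nat set" and p :: "nat \<Rightarrow> real" and eps M :: real
  assumes fA: "finite A" and TA: "T \<subseteq> A"
    and p01: "\<And>i. i \<in> A \<Longrightarrow> 0 \<le> p i \<and> p i \<le> 1"
    and pT: "\<And>i. i \<in> T \<Longrightarrow> 0 < p i \<and> 1 / p i \<le> M"
    and M: "0 < M" and eps: "0 < eps" "eps \<le> 1"
  shows "measure_pmf.prob (Pi_pmf A False (\<lambda>i. bernoulli_pmf (p i)))
            {f. (1 + eps) * real (card T) \<le> Xs T p f} \<le> exp (- (eps\<^sup>2 * real (card T) / (4 * M)))"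
    and "measure_pmf.prob (Pi_pmf A False (\<lambda>i. bernoulli_pmf (p i)))
            {f. Xs T p f \<le> (1 - eps) * real (card T)} \<le> exp (- (eps\<^sup>2 * real (card T) / (4 * M)))"
proof -
  define P where "P = Pi_pmf A False (\<lambda>i. bernoulli_pmf (p i))"
  define W where "W = real (card T)"
  have int: "integrable (measure_pmf P) g" for g :: "(nat \<Rightarrow> bool) \<Rightarrow> real"
    unfolding P_def by (intro integrable_measure_pmf_finite Pi_bern_fin fA)
  have gen: "measure_pmf.prob P {f. exp (lam * a) \<le> exp (lam * Xs T p f)}
      \<le> exp (W * (lam + lam\<^sup>2 * M) - lam * a)" if lam: "\<bar>lam\<bar> * M \<le> 1" for lam a
  proof -
    have "measure_pmf.prob P {f. exp (lam * a) \<le> exp (lam * Xs T p f)}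
        = measure_pmf.prob P {f \<in> space (measure_pmf P). exp (lam * Xs T p f) \<ge> exp (lam * a)}"
      by simp
    also have "\<dots> \<le> measure_pmf.expectation P (\<lambda>f. exp (lam * Xs T p f)) / exp (lam * a)"
      by (intro integral_Markov_inequality_measure[where A = UNIV] int) auto
    also have "\<dots> \<le> exp (W * (lam + lam\<^sup>2 * M)) / exp (lam * a)"
      unfolding P_def W_def by (intro divide_right_mono mgf[OF fA TA p01 pT lam]) auto
    also have "\<dots> = exp (W * (lam + lam\<^sup>2 * M) - lam * a)" by (simp add: exp_diff)
    finally show ?thesis .
  qed
  have l1: "\<bar>eps / (2 * M)\<bar> * M \<le> 1" "\<bar>- eps / (2 * M)\<bar> * M \<le> 1"
    using M eps by (auto simp: abs_divide field_simps)
  have "measure_pmf.prob P {f. (1 + eps) * W \<le> Xs T p f}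
      = measure_pmf.prob P {f. exp (eps / (2 * M) * ((1 + eps) * W)) \<le> exp (eps / (2 * M) * Xs T p f)}"
  proof -
    have c: "0 < eps / (2 * M)" using M eps by simp
    have "(a \<le> x) \<longleftrightarrow> exp (c * a) \<le> exp (c * x)" if "0 < c" for c a x :: real
      using that by (simp add: mult_le_cancel_left_pos)
    from this[OF c] show ?thesis by presburger
  qed
  also have "\<dots> \<le> exp (W * (eps / (2 * M) + (eps / (2 * M))\<^sup>2 * M) - eps / (2 * M) * ((1 + eps) * W))"
    by (rule gen[OF l1(1)])
  also have "W * (eps / (2 * M) + (eps / (2 * M))\<^sup>2 * M) - eps / (2 * M) * ((1 + eps) * W)
      = - (eps\<^sup>2 * W / (4 * M))"
    using M by (simp add: field_simps power2_eq_square)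
  finally show "measure_pmf.prob (Pi_pmf A False (\<lambda>i. bernoulli_pmf (p i)))
            {f. (1 + eps) * real (card T) \<le> Xs T p f} \<le> exp (- (eps\<^sup>2 * real (card T) / (4 * M)))"
    by (simp add: P_def W_def)
  have "measure_pmf.prob P {f. Xs T p f \<le> (1 - eps) * W}
      = measure_pmf.prob P {f. exp (- eps / (2 * M) * ((1 - eps) * W)) \<le> exp (- eps / (2 * M) * Xs T p f)}"
  proof -
    have c: "- eps / (2 * M) < 0" using M eps by simp
    have "(x \<le> a) \<longleftrightarrow> exp (c * a) \<le> exp (c * x)" if "c < 0" for c a x :: real
      using that by (simp add: mult_le_cancel_left_neg)
    from this[OF c] show ?thesis by presburger
  qed
  also have "\<dots> \<le> exp (W * (- eps / (2 * M) + (- eps / (2 * M))\<^sup>2 * M) - (- eps / (2 * M)) * ((1 - eps) * W))"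
    by (rule gen[OF l1(2)])
  also have "W * (- eps / (2 * M) + (- eps / (2 * M))\<^sup>2 * M) - (- eps / (2 * M)) * ((1 - eps) * W)
      = - (eps\<^sup>2 * W / (4 * M))"
    using M by (simp add: field_simps power2_eq_square)
  finally show "measure_pmf.prob (Pi_pmf A False (\<lambda>i. bernoulli_pmf (p i)))
            {f. Xs T p f \<le> (1 - eps) * real (card T)} \<le> exp (- (eps\<^sup>2 * real (card T) / (4 * M)))"
    by (simp add: P_def W_def)
qed


locale fcode = field R for R :: "nat ring" (structure) +
  assumes finR: "finite (carrier R)"
begin

lemma q_ge2: "2 \<le> card (carrier R)"
proof -
  have "{\<zero>, \<one>} \<subseteq> carrier R" by auto
  hence "card {\<zero>, \<one>} \<le> card (carrier R)" using finR by (rule card_mono[rotated])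
  thus ?thesis using zero_not_one by simp
qed

lemma vecs_finite: "finite (vecs R n)"
proof -
  have "vecs R n \<subseteq> (\<lambda>g i. if i < n then g i else \<zero>) ` (PiE {..<n} (\<lambda>_. carrier R))"
  proof
    fix v assume v: "v \<in> vecs R n"
    have "v = (\<lambda>i. if i < n then restrict v {..<n} i else \<zero>)"
      using v by (auto simp: vecs_def fun_eq_iff)
    moreover have "restrict v {..<n} \<in> PiE {..<n} (\<lambda>_. carrier R)"
      using v by (auto simp: vecs_def)
    ultimately show "v \<in> (\<lambda>g i. if i < n then g i else \<zero>) ` (PiE {..<n} (\<lambda>_. carrier R))"
      by blast
  qed
  moreover have "finite (PiE {..<n} (\<lambda>_. carrier R))" using finR by (intro finite_PiE) auto
  ultimately show ?thesis using finite_subset by blast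
qed

lemma lc_finite: "linear_code R n D \<Longrightarrow> finite D"
  using vecs_finite finite_subset unfolding linear_code_def by blast

lemma wt_pos: "i < n \<Longrightarrow> v i \<noteq> \<zero> \<Longrightarrow> 0 < wt R n v"
proof -
  assume a: "i < n" "v i \<noteq> \<zero>"
  have "finite {i. i < n \<and> v i \<noteq> \<zero>}" by auto
  moreover have "i \<in> {i. i < n \<and> v i \<noteq> \<zero>}" using a by auto
  ultimately show ?thesis unfolding wt_def by (auto simp: card_gt_0_iff)
qed

lemma min_wt_props:
  assumes "finite D" "i \<in> code_support R n D"
  shows "\<exists>c\<in>D. c i \<noteq> \<zero> \<and> wt R n c = min_wt R n D i"
    and "\<And>c. c \<in> D \<Longrightarrow> c i \<noteq> \<zero> \<Longrightarrow> min_wt R n D i \<le> wt R n c"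
    and "0 < min_wt R n D i"
proof -
  have ne: "{c\<in>D. c i \<noteq> \<zero>} \<noteq> {}" using assms(2) by (auto simp: code_support_def)
  have fi: "finite (wt R n ` {c\<in>D. c i \<noteq> \<zero>})" using assms(1) by auto
  have "min_wt R n D i \<in> wt R n ` {c\<in>D. c i \<noteq> \<zero>}"
    unfolding min_wt_def using fi ne by (intro Min_in) auto
  thus "\<exists>c\<in>D. c i \<noteq> \<zero> \<and> wt R n c = min_wt R n D i" by auto
  then obtain c where "c\<in>D" "c i \<noteq> \<zero>" "wt R n c = min_wt R n D i" by blast
  moreover have "i < n" using assms(2) by (auto simp: code_support_def)
  ultimately show "0 < min_wt R n D i" using wt_pos by metis
  show "\<And>c. c \<in> D \<Longrightarrow> c i \<noteq> \<zero> \<Longrightarrow> min_wt R n D i \<le> wt R n c"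
    unfolding min_wt_def using fi by (intro Min_le) auto
qed

lemma zero_ne: "c \<in> vecs R n \<Longrightarrow> c \<noteq> zero_vec R n \<Longrightarrow> \<exists>j<n. c j \<noteq> \<zero>"
  by (auto simp: vecs_def zero_vec_def fun_eq_iff) (meson not_le)

lemma key:
  assumes "linear_code R n D" "card D \<le> card (carrier R) ^ m"
  shows "(\<Sum>i\<in>code_support R n D. 1 / real (min_wt R n D i)) \<le> real m"
  using assms
proof (induction m arbitrary: D)
  case 0
  have fD: "finite D" using lc_finite 0 by blast
  have z: "zero_vec R n \<in> D" using 0 by (auto simp: linear_code_def)
  have "card D \<le> 1" using 0(2) by simp
  hence "D = {zero_vec R n}"
    using z fD by (auto simp: card_le_Suc0_iff_eq)
  hence "code_support R n D = {}" by (auto simp: code_support_def zero_vec_def)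
  thus ?case by simp
next
  case (Suc m)
  have fD: "finite D" using lc_finite Suc by blast
  have DV: "D \<subseteq> vecs R n" using Suc(2) by (auto simp: linear_code_def)
  show ?case
  proof (cases "\<exists>c\<in>D. 0 < wt R n c")
    case False
    have "code_support R n D = {}"
    proof -
      { fix i c assume "i < n" "c \<in> D" "c i \<noteq> \<zero>"
        hence False using False wt_pos[of i n c] by auto }
      thus ?thesis by (auto simp: code_support_def)
    qed
    thus ?thesis by simp
  next
    case True
    then obtain c0 where "c0 \<in> D \<and> 0 < wt R n c0" by blast
    from ex_has_least_nat[of "\<lambda>c. c \<in> D \<and> 0 < wt R n c", OF this, of "wt R n"]
    obtain c where cD: "c \<in> D" and cpos: "0 < wt R n c"
      and cmin: "\<And>c'. c' \<in> D \<Longrightarrow> 0 < wt R n c' \<Longrightarrow> wt R n c \<le> wt R n c'" by blast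
    define Z where "Z = {i. i < n \<and> c i \<noteq> \<zero>}"
    have wtZ: "wt R n c = card Z" by (simp add: wt_def Z_def)
    have cV: "c \<in> vecs R n" using cD DV by auto
    have cout: "\<And>i. n \<le> i \<Longrightarrow> c i = \<zero>" using cV by (auto simp: vecs_def)
    define \<phi> where "\<phi> v = (\<lambda>i. if c i \<noteq> \<zero> then \<zero> else v i)" for v :: "nat \<Rightarrow> nat"
    define D' where "D' = \<phi> ` D"
    have lc': "linear_code R n D'"
    proof -
      have "D' \<subseteq> vecs R n" using DV by (auto simp: D'_def \<phi>_def vecs_def)
      moreover have "zero_vec R n \<in> D'"
      proof -
        have "\<phi> (zero_vec R n) = zero_vec R n" by (auto simp: \<phi>_def zero_vec_def)
        thus ?thesis using Suc(2) by (force simp: D'_def linear_code_def)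
      qed
      moreover have "vadd R n u v \<in> D'" if uv: "u \<in> D'" "v \<in> D'" for u v
      proof -
        obtain u0 v0 where u0: "u0 \<in> D" "u = \<phi> u0" and v0: "v0 \<in> D" "v = \<phi> v0"
          using uv by (auto simp: D'_def)
        have "vadd R n u v = \<phi> (vadd R n u0 v0)"
          using u0 v0 cout by (auto simp: vadd_def \<phi>_def fun_eq_iff)
        moreover have "vadd R n u0 v0 \<in> D" using u0 v0 Suc(2) by (auto simp: linear_code_def)
        ultimately show ?thesis by (auto simp: D'_def)
      qed
      moreover have "smult_vec R n a v \<in> D'" if av: "a \<in> carrier R" "v \<in> D'" for a v
      proof -
        obtain v0 where v0: "v0 \<in> D" "v = \<phi> v0"
          using av by (auto simp: D'_def)
        have "smult_vec R n a v = \<phi> (smult_vec R n a v0)"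
          using v0 cout av by (auto simp: smult_vec_def \<phi>_def fun_eq_iff)
        moreover have "smult_vec R n a v0 \<in> D" using v0 av Suc(2) by (auto simp: linear_code_def)
        ultimately show ?thesis by (auto simp: D'_def)
      qed
      ultimately show ?thesis unfolding linear_code_def by blast
    qed
    obtain j where j: "j < n" "c j \<noteq> \<zero>"
    proof -
      have "{i. i < n \<and> c i \<noteq> \<zero>} \<noteq> {}" using cpos unfolding wt_def by (metis card.empty less_irrefl)
      thus ?thesis using that by blast
    qed
    have fib: "card (carrier R) \<le> card {v\<in>D. \<phi> v = d}" if dD: "d \<in> D'" for d
    proof -
      obtain v where v: "v \<in> D" "d = \<phi> v" using dD by (auto simp: D'_def)
      have vV: "v \<in> vecs R n" using v DV by auto
      define g where "g a = vadd R n v (smult_vec R n a c)" for a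
      have "g ` carrier R \<subseteq> {v\<in>D. \<phi> v = d}"
      proof
        fix x assume "x \<in> g ` carrier R"
        then obtain a where a: "a \<in> carrier R" "x = g a" by auto
        have "smult_vec R n a c \<in> D" using a cD Suc(2) by (auto simp: linear_code_def)
        hence "g a \<in> D" using v Suc(2) by (auto simp: linear_code_def g_def)
        moreover have "\<phi> (g a) = d"
          using v vV cV a cout
          by (auto simp: g_def \<phi>_def vadd_def smult_vec_def fun_eq_iff vecs_def)
        ultimately show "x \<in> {v\<in>D. \<phi> v = d}" using a by auto
      qed
      moreover have "inj_on g (carrier R)"
      proof
        fix a b assume ab: "a \<in> carrier R" "b \<in> carrier R" "g a = g b"
        hence "g a j = g b j" by simp
        hence "v j \<oplus> a \<otimes> c j = v j \<oplus> b \<otimes> c j" using j by (simp add: g_def vadd_def smult_vec_def)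
        moreover have "v j \<in> carrier R" "c j \<in> carrier R" using vV cV j by (auto simp: vecs_def)
        ultimately have "a \<otimes> c j \<oplus> v j = b \<otimes> c j \<oplus> v j" using ab by (simp add: a_comm)
        hence "a \<otimes> c j = b \<otimes> c j" using ab \<open>v j \<in> carrier R\<close> \<open>c j \<in> carrier R\<close>
          by (simp add: add.right_cancel)
        thus "a = b" using m_rcancel[of "c j" a b] j ab \<open>c j \<in> carrier R\<close> by simp
      qed
      moreover have "finite {v\<in>D. \<phi> v = d}" using fD by auto
      ultimately have "card (g ` carrier R) \<le> card {v\<in>D. \<phi> v = d}"
        by (intro card_mono) auto
      thus ?thesis using card_image[OF \<open>inj_on g (carrier R)\<close>] by simp
    qed
    have cardD: "card (carrier R) * card D' \<le> card D"
    proof -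
      have "card D = (\<Sum>d\<in>\<phi> ` D. card {v\<in>D. \<phi> v = d})"
        using sum.image_gen[OF fD, of "\<lambda>_. (1::nat)" \<phi>] by simp
      also have "\<dots> \<ge> (\<Sum>d\<in>D'. card (carrier R))"
        using fib unfolding D'_def by (intro sum_mono) auto
      finally show ?thesis by (simp add: mult.commute)
    qed
    have cD': "card D' \<le> card (carrier R) ^ m"
    proof -
      have "card (carrier R) * card D' \<le> card (carrier R) * card (carrier R) ^ m"
        using cardD Suc(3) by (metis dual_order.trans power_Suc)
      thus ?thesis using q_ge2 by simp
    qed
    have IH: "(\<Sum>i\<in>code_support R n D'. 1 / real (min_wt R n D' i)) \<le> real m"
      using Suc(1)[OF lc' cD'] .
    have fD': "finite D'" using fD by (simp add: D'_def)
    have ZS: "Z \<subseteq> code_support R n D" using cD by (auto simp: Z_def code_support_def)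
    have mwZ: "min_wt R n D i = wt R n c" if "i \<in> Z" for i
    proof -
      have iS: "i \<in> code_support R n D" using that ZS by auto
      have "min_wt R n D i \<le> wt R n c" using min_wt_props(2)[OF fD iS cD] that by (auto simp: Z_def)
      moreover obtain c' where "c' \<in> D" "c' i \<noteq> \<zero>" "wt R n c' = min_wt R n D i"
        using min_wt_props(1)[OF fD iS] by blast
      moreover have "0 < wt R n c'" using that \<open>c' i \<noteq> \<zero>\<close> wt_pos by (auto simp: Z_def)
      ultimately show ?thesis using cmin by force
    qed
    have sumZ: "(\<Sum>i\<in>Z. 1 / real (min_wt R n D i)) = 1"
      using mwZ wtZ cpos by simp
    have rest: "i \<in> code_support R n D' \<and> min_wt R n D' i \<le> min_wt R n D i"
      if "i \<in> code_support R n D - Z" for i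
    proof -
      have iS: "i \<in> code_support R n D" and iZ: "i \<notin> Z" using that by auto
      have iN: "i < n" using iS by (auto simp: code_support_def)
      obtain v where v: "v \<in> D" "v i \<noteq> \<zero>" "wt R n v = min_wt R n D i"
        using min_wt_props(1)[OF fD iS] by blast
      have ci: "c i = \<zero>" using iZ iN by (auto simp: Z_def)
      have pv: "\<phi> v \<in> D'" "\<phi> v i \<noteq> \<zero>" using v ci by (auto simp: D'_def \<phi>_def)
      hence iS': "i \<in> code_support R n D'" using iN by (auto simp: code_support_def)
      have "wt R n (\<phi> v) \<le> wt R n v"
        unfolding wt_def by (intro card_mono) (auto simp: \<phi>_def)
      moreover have "min_wt R n D' i \<le> wt R n (\<phi> v)" using min_wt_props(2)[OF fD' iS' pv] .
      ultimately show ?thesis using v iS' by simp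
    qed
    have fS: "finite (code_support R n D)" by (auto simp: code_support_def)
    have "(\<Sum>i\<in>code_support R n D. 1 / real (min_wt R n D i))
        = (\<Sum>i\<in>Z. 1 / real (min_wt R n D i)) + (\<Sum>i\<in>code_support R n D - Z. 1 / real (min_wt R n D i))"
      using sum.subset_diff[OF ZS fS] by (simp add: add.commute)
    also have "(\<Sum>i\<in>code_support R n D - Z. 1 / real (min_wt R n D i))
        \<le> (\<Sum>i\<in>code_support R n D - Z. 1 / real (min_wt R n D' i))"
    proof (intro sum_mono)
      fix i assume i: "i \<in> code_support R n D - Z"
      have "0 < min_wt R n D' i" using min_wt_props(3)[OF fD'] rest[OF i] by blast
      thus "1 / real (min_wt R n D i) \<le> 1 / real (min_wt R n D' i)"
        using rest[OF i] by (simp add: frac_le)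
    qed
    also have "\<dots> \<le> (\<Sum>i\<in>code_support R n D'. 1 / real (min_wt R n D' i))"
      using rest by (intro sum_mono2) (auto simp: code_support_def)
    finally show ?thesis using sumZ IH by simp
  qed
qed

lemma card_code:
  assumes lc: "linear_code R n Cd" and cd: "code_dim R n Cd k"
  shows "card Cd \<le> card (carrier R) ^ k"
proof -
  obtain b where b: "\<forall>j<k. b j \<in> Cd" and Cd: "Cd = {lin_comb R n k a b |a. \<forall>j<k. a j \<in> carrier R}"
    using cd unfolding code_dim_def by blast
  have bc: "b j i \<in> carrier R" if "j < k" "i < n" for j i
    using b that lc by (auto simp: linear_code_def vecs_def)
  have sub: "Cd \<subseteq> (\<lambda>a. lin_comb R n k a b) ` PiE {..<k} (\<lambda>_. carrier R)"
  proof
    fix x assume "x \<in> Cd"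
    then obtain a where a: "\<forall>j<k. a j \<in> carrier R" "x = lin_comb R n k a b" using Cd by blast
    have "lin_comb R n k a b = lin_comb R n k (restrict a {..<k}) b"
      unfolding lin_comb_def
    proof (intro ext)
      fix i
      show "(if i < n then finsum R (\<lambda>j. a j \<otimes> b j i) {..<k} else \<zero>) =
            (if i < n then finsum R (\<lambda>j. restrict a {..<k} j \<otimes> b j i) {..<k} else \<zero>)"
      proof (cases "i < n")
        case True
        have "finsum R (\<lambda>j. a j \<otimes> b j i) {..<k} = finsum R (\<lambda>j. restrict a {..<k} j \<otimes> b j i) {..<k}"
          by (intro finsum_cong') (use a bc True in auto)
        thus ?thesis by simp
      qed simp
    qed
    moreover have "restrict a {..<k} \<in> PiE {..<k} (\<lambda>_. carrier R)" using a by auto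
    ultimately show "x \<in> (\<lambda>a. lin_comb R n k a b) ` PiE {..<k} (\<lambda>_. carrier R)" using a by blast
  qed
  have "card Cd \<le> card ((\<lambda>a. lin_comb R n k a b) ` PiE {..<k} (\<lambda>_. carrier R))"
    using sub finR by (intro card_mono finite_imageI finite_PiE) auto
  also have "\<dots> \<le> card (PiE {..<k} (\<lambda>_. carrier R))" using finR by (intro card_image_le finite_PiE) auto
  also have "\<dots> = card (carrier R) ^ k" by (simp add: card_PiE)
  finally show ?thesis .
qed

end

theorem mainTheorem7:
  "\<exists>C::real. \<forall>(R::nat ring) (n::nat) (Cd::(nat \<Rightarrow> nat) set) (k::nat) (eps::real).
     field R \<and> finite (carrier R) \<and> linear_code R n Cd \<and> code_dim R n Cd k \<and> 1 \<le> k \<and>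
     0 < eps \<and> eps < 1 \<longrightarrow>
       (\<exists>S w'. is_sparsifier R n Cd eps
                 (C * real k ^ 2 * log 2 (real (card (carrier R))) / eps\<^sup>2) S w') \<and>
       measure_pmf.prob (sample_pmf R n Cd k eps)
         {S. is_sparsifier R n Cd eps
               (C * real k ^ 2 * log 2 (real (card (carrier R))) / eps\<^sup>2) S
               (\<lambda>i. 1 / samp_prob R n Cd k eps i)} > 0"
proof (intro exI[of _ 40] allI impI)
  fix R :: "nat ring" and n :: nat and Cd :: "(nat \<Rightarrow> nat) set" and k :: nat and eps :: real
  assume H: "field R \<and> finite (carrier R) \<and> linear_code R n Cd \<and> code_dim R n Cd k \<and> 1 \<le> k \<and>
     0 < eps \<and> eps < 1"
  interpret fcode R using H by (intro fcode.intro fcode_axioms.intro) auto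
  have lc: "linear_code R n Cd" and cd: "code_dim R n Cd k" and k1: "1 \<le> k"
    and e0: "0 < eps" and e1: "eps < 1" using H by auto
  define q where "q = card (carrier R)"
  define L where "L = log 2 (real q)"
  define A where "A = code_support R n Cd"
  define p where "p = samp_prob R n Cd k eps"
  define P where "P = Pi_pmf A False (\<lambda>i. bernoulli_pmf (p i))"
  define s where "s = 40 * real k ^ 2 * L / eps\<^sup>2"
  define g where "g f = {i\<in>A. f i}" for f :: "nat \<Rightarrow> bool"
  have q2: "2 \<le> q" using q_ge2 by (simp add: q_def)
  have L1: "1 \<le> L" using q2 by (simp add: L_def)
  have fCd: "finite Cd" using lc_finite[OF lc] .
  have cCd: "card Cd \<le> q ^ k" using card_code[OF lc cd] by (simp add: q_def)
  have An: "A \<subseteq> {..<n}" by (auto simp: A_def code_support_def)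
  have fA: "finite A" using An finite_subset by blast
  have wpos: "0 < min_wt R n Cd i" if "i \<in> A" for i
    using min_wt_props(3)[OF fCd] that by (simp add: A_def)
  have p_def': "p i = min 1 (10 * real k * L / (eps\<^sup>2 * real (min_wt R n Cd i)))" for i
    by (simp add: p_def samp_prob_def L_def q_def)
  have p01: "0 \<le> p i \<and> p i \<le> 1" for i
    unfolding p_def' using L1 e0 by auto
  have ppos: "0 < p i" if "i \<in> A" for i
    unfolding p_def' using L1 e0 k1 wpos[OF that] by auto
  have ple: "p i \<le> 10 * real k * L / (eps\<^sup>2 * real (min_wt R n Cd i))" for i
    unfolding p_def' by simp
  have sumw: "(\<Sum>i\<in>A. 1 / real (min_wt R n Cd i)) \<le> real k"
    using key[OF lc] cCd by (simp add: A_def q_def)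
  have sump: "(\<Sum>i\<in>A. p i) \<le> s / 4"
  proof -
    have "(\<Sum>i\<in>A. p i) \<le> (\<Sum>i\<in>A. 10 * real k * L / eps\<^sup>2 * (1 / real (min_wt R n Cd i)))"
      using ple by (intro sum_mono) (simp add: field_simps)
    also have "\<dots> = 10 * real k * L / eps\<^sup>2 * (\<Sum>i\<in>A. 1 / real (min_wt R n Cd i))"
      by (simp add: sum_distrib_left)
    also have "\<dots> \<le> 10 * real k * L / eps\<^sup>2 * real k"
      using sumw L1 e0 by (intro mult_left_mono) auto
    also have "\<dots> = s / 4" by (simp add: s_def power2_eq_square field_simps)
    finally show ?thesis .
  qed
  have spos: "0 < s" using L1 e0 k1 by (simp add: s_def)
  have fP: "finite (set_pmf P)" unfolding P_def by (rule Pi_bern_fin[OF fA])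
  have intP: "integrable (measure_pmf P) h" for h :: "(nat \<Rightarrow> bool) \<Rightarrow> real"
    by (rule integrable_measure_pmf_finite[OF fP])
  define Bad0 where "Bad0 = {f. s < real (card (g f))}"
  have pBad0: "measure_pmf.prob P Bad0 \<le> 1 / 4"
  proof -
    have cg: "real (card (g f)) = (\<Sum>i\<in>A. (\<lambda>b. if b then 1 else 0) (f i))" for f
    proof -
      have "real (card (g f)) = (\<Sum>i\<in>{i\<in>A. f i}. 1)" by (simp add: g_def)
      also have "\<dots> = (\<Sum>i\<in>A. if f i then 1 else 0)" by (rule sum.inter_filter[OF fA])
      finally show ?thesis by simp
    qed
    have E: "measure_pmf.expectation P (\<lambda>f. real (card (g f))) = (\<Sum>i\<in>A. p i)"
    proof -
      have "measure_pmf.expectation P (\<lambda>f. real (card (g f)))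
          = (\<Sum>i\<in>A. measure_pmf.expectation P (\<lambda>f. (\<lambda>b. if b then 1 else 0) (f i)))"
        unfolding cg by (intro Bochner_Integration.integral_sum intP)
      also have "\<dots> = (\<Sum>i\<in>A. p i)"
      proof (intro sum.cong refl)
        fix i assume i: "i \<in> A"
        have "measure_pmf.expectation P (\<lambda>f. (\<lambda>b. if b then 1 else 0) (f i))
            = measure_pmf.expectation (map_pmf (\<lambda>f. f i) P) (\<lambda>b. if b then 1 else 0 :: real)"
          by simp
        also have "map_pmf (\<lambda>f. f i) P = bernoulli_pmf (p i)"
          unfolding P_def Pi_pmf_component[OF fA] using i by simp
        finally show "measure_pmf.expectation P (\<lambda>f. (\<lambda>b. if b then 1 else 0) (f i)) = p i"
          using p01[of i] by simp
      qed
      finally show ?thesis .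
    qed
    have "measure_pmf.prob P Bad0 \<le> measure_pmf.prob P {f \<in> space (measure_pmf P). real (card (g f)) \<ge> s}"
      unfolding Bad0_def by (intro measure_pmf.finite_measure_mono) auto
    also have "\<dots> \<le> measure_pmf.expectation P (\<lambda>f. real (card (g f))) / s"
      by (intro integral_Markov_inequality_measure[where A = UNIV] intP spos) auto
    also have "\<dots> \<le> (s / 4) / s" using E sump spos by (intro divide_right_mono) auto
    also have "\<dots> = 1 / 4" using spos by simp
    finally show ?thesis .
  qed
  define Tv where "Tv v = {i. i < n \<and> v i \<noteq> \<zero>\<^bsub>R\<^esub>}" for v :: "nat \<Rightarrow> nat"
  define BadV where "BadV v = {f. \<not> ((1 - eps) * real (wt R n v) \<le> Xs (Tv v) p f \<and>
                                    Xs (Tv v) p f \<le> (1 + eps) * real (wt R n v))}" for v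
  have pBadV: "measure_pmf.prob P (BadV v) \<le> 2 * exp (- (5 / 2 * real k * L))" if vC: "v \<in> Cd" for v
  proof -
    define T where "T = Tv v"
    define W where "W = real (card T)"
    have wtv: "real (wt R n v) = W" by (simp add: W_def T_def Tv_def wt_def)
    have TA: "T \<subseteq> A" using vC by (auto simp: T_def Tv_def A_def code_support_def)
    have fT: "finite T" using TA fA finite_subset by blast
    have wleW: "real (min_wt R n Cd i) \<le> W" if "i \<in> T" for i
    proof -
      have "i \<in> code_support R n Cd" using that TA by (auto simp: A_def)
      from min_wt_props(2)[OF fCd this vC] that show ?thesis
        by (simp add: wtv[symmetric] T_def Tv_def)
    qed
    have kLpos: "0 < 10 * real k * L" using k1 L1 by simp
    show ?thesis
    proof (cases "eps\<^sup>2 * W \<le> 10 * real k * L")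
      case True
      have p1: "p i = 1" if "i \<in> T" for i
      proof -
        have wp: "0 < real (min_wt R n Cd i)" using wpos that TA by auto
        have "eps\<^sup>2 * real (min_wt R n Cd i) \<le> eps\<^sup>2 * W" using wleW[OF that] by (intro mult_left_mono) auto
        hence "eps\<^sup>2 * real (min_wt R n Cd i) \<le> 10 * real k * L" using True by linarith
        hence "1 \<le> 10 * real k * L / (eps\<^sup>2 * real (min_wt R n Cd i))"
          using wp e0 by (simp add: field_simps)
        thus ?thesis unfolding p_def' by simp
      qed
      have "set_pmf P \<inter> BadV v = {}"
      proof (rule ccontr)
        assume "set_pmf P \<inter> BadV v \<noteq> {}"
        then obtain f where f: "f \<in> set_pmf P" "f \<in> BadV v" by blast
        have "f i" if "i \<in> T" for i
        proof -
          have "f \<in> PiE_dflt A False (set_pmf \<circ> (\<lambda>i. bernoulli_pmf (p i)))"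
            using f(1) unfolding P_def set_Pi_pmf[OF fA] .
          hence "f i \<in> set_pmf (bernoulli_pmf (p i))"
            using that TA unfolding PiE_dflt_def by auto
          moreover have "pmf (bernoulli_pmf (p i)) False = 0" using p1[OF that] by simp
          ultimately show ?thesis by (metis set_pmf_iff)
        qed
        hence "Xs T p f = W" unfolding Xs_def W_def using p1 by simp
        thus False using f(2) e0 wtv by (auto simp: BadV_def T_def field_simps)
      qed
      hence "measure_pmf.prob P (BadV v) = 0" by (simp add: measure_pmf_zero_iff)
      thus ?thesis by simp
    next
      case False
      define M where "M = eps\<^sup>2 * W / (10 * real k * L)"
      have M1: "1 < M" using False kLpos by (simp add: M_def field_simps)
      have pT: "0 < p i \<and> 1 / p i \<le> M" if "i \<in> T" for i
      proof -
        have i: "i \<in> A" using that TA by auto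
        have wp: "0 < real (min_wt R n Cd i)" using wpos i by auto
        show ?thesis
        proof (cases "p i = 1")
          case True thus ?thesis using M1 by simp
        next
          case False
          hence pe: "p i = 10 * real k * L / (eps\<^sup>2 * real (min_wt R n Cd i))"
            unfolding p_def' by (auto simp: min_def split: if_splits)
          have "1 / p i = eps\<^sup>2 * real (min_wt R n Cd i) / (10 * real k * L)" by (simp add: pe)
          also have "\<dots> \<le> M" unfolding M_def using wleW[OF that] kLpos e0
            by (intro divide_right_mono mult_left_mono) auto
          finally show ?thesis using ppos[OF i] by simp
        qed
      qed
      have nz: "eps\<^sup>2 * W \<noteq> 0" using False kLpos by auto
      have ex: "eps\<^sup>2 * W / (4 * M) = 5 / 2 * real k * L"
        unfolding M_def using nz kLpos by (simp add: field_simps)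
      have "BadV v \<subseteq> {f. Xs T p f \<le> (1 - eps) * W} \<union> {f. (1 + eps) * W \<le> Xs T p f}"
        by (auto simp: BadV_def T_def wtv)
      hence "measure_pmf.prob P (BadV v) \<le> measure_pmf.prob P ({f. Xs T p f \<le> (1 - eps) * W} \<union> {f. (1 + eps) * W \<le> Xs T p f})"
        by (intro measure_pmf.finite_measure_mono) auto
      also have "\<dots> \<le> measure_pmf.prob P {f. Xs T p f \<le> (1 - eps) * W} + measure_pmf.prob P {f. (1 + eps) * W \<le> Xs T p f}"
        by (intro measure_Un_le) auto
      also have "\<dots> \<le> exp (- (eps\<^sup>2 * W / (4 * M))) + exp (- (eps\<^sup>2 * W / (4 * M)))"
      proof -
        have p01A: "\<And>i. i \<in> A \<Longrightarrow> 0 \<le> p i \<and> p i \<le> 1" using p01 by blast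
        have M0: "0 < M" using M1 by simp
        have e1': "eps \<le> 1" using e1 by simp
        note t = tails[of A T p M eps, OF fA TA p01A pT M0 e0 e1']
        show ?thesis using t unfolding P_def W_def by (intro add_mono) auto
      qed
      also have "\<dots> = 2 * exp (- (5 / 2 * real k * L))" by (simp add: ex)
      finally show ?thesis .
    qed
  qed
  have sumV: "(\<Sum>v\<in>Cd. measure_pmf.prob P (BadV v)) < 3 / 4"
  proof -
    have "(\<Sum>v\<in>Cd. measure_pmf.prob P (BadV v)) \<le> (\<Sum>v\<in>Cd. 2 * exp (- (5 / 2 * real k * L)))"
      using pBadV by (intro sum_mono) auto
    also have "\<dots> = real (card Cd) * (2 * exp (- (5 / 2 * real k * L)))" by simp
    also have "\<dots> \<le> real q ^ k * (2 * exp (- (5 / 2 * real k * L)))"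
      using cCd by (intro mult_right_mono) (auto simp flip: of_nat_power)
    also have "real q ^ k = exp (real k * ln (real q))"
      using q2 by (simp add: exp_of_nat_mult)
    also have "exp (real k * ln (real q)) * (2 * exp (- (5 / 2 * real k * L))) \<le> 2 * exp (- (3 / 2))"
    proof -
      have lnq: "ln (real q) = L * ln 2" using q2 by (simp add: L_def log_def)
      have "ln 2 \<le> (1::real)" using ln_le_minus_one[of 2] by simp
      hence "L * ln 2 \<le> L * 1" using L1 by (intro mult_left_mono) auto
      hence "ln (real q) \<le> L" using lnq by simp
      hence a: "real k * ln (real q) \<le> real k * L" by (intro mult_left_mono) auto
      have b: "5 / 2 * real k * L = 5 / 2 * (real k * L)" by simp
      have c: "1 * 1 \<le> real k * L" by (rule mult_mono) (use k1 L1 in auto)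
      have "real k * ln (real q) - 5 / 2 * real k * L \<le> - (3 / 2)"
        using a b c by linarith
      hence "real k * ln (real q) + - (5 / 2 * real k * L) \<le> - (3 / 2)" by simp
      hence e: "exp (real k * ln (real q)) * exp (- (5 / 2 * real k * L)) \<le> exp (- (3 / 2))"
        by (simp only: exp_le_cancel_iff exp_add[symmetric])
      have f: "exp (real k * ln (real q)) * (2 * exp (- (5 / 2 * real k * L)))
          = 2 * (exp (real k * ln (real q)) * exp (- (5 / 2 * real k * L)))"
        by (simp only: mult.left_commute)
      show ?thesis using e f by linarith
    qed
    also have "2 * exp (- (3 / 2)) < (3 / 4 :: real)"
    proof -
      have "1 + 3/2 + (3/2)\<^sup>2 / 2 \<le> exp (3 / 2 :: real)" by (rule exp_lower_Taylor_quadratic) simp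
      hence "8 / 3 < exp (3 / 2 :: real)" by (simp add: power2_eq_square)
      thus ?thesis by (simp add: exp_minus field_simps)
    qed
    finally show ?thesis by simp
  qed
  define Good where "Good S = is_sparsifier R n Cd eps
               (40 * real k ^ 2 * log 2 (real (card (carrier R))) / eps\<^sup>2) S
               (\<lambda>i. 1 / samp_prob R n Cd k eps i)" for S
  have goodI: "Good (g f)" if "f \<notin> Bad0" "\<And>v. v \<in> Cd \<Longrightarrow> f \<notin> BadV v" for f
  proof -
    have sumeq: "(\<Sum>i\<in>{i\<in>g f. v i \<noteq> \<zero>\<^bsub>R\<^esub>}. 1 / p i) = Xs (Tv v) p f" if vC: "v \<in> Cd" for v
    proof -
      have "{i\<in>g f. v i \<noteq> \<zero>\<^bsub>R\<^esub>} = {i\<in>Tv v. f i}"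
        using vC An by (auto simp: g_def Tv_def A_def code_support_def)
      moreover have "finite (Tv v)" by (simp add: Tv_def)
      ultimately show ?thesis unfolding Xs_def by (simp add: sum.inter_filter)
    qed
    show ?thesis unfolding Good_def is_sparsifier_def
    proof (intro conjI ballI)
      show "g f \<subseteq> {..<n}" using An by (auto simp: g_def)
      show "real (card (g f)) \<le> 40 * real k ^ 2 * log 2 (real (card (carrier R))) / eps\<^sup>2"
        using that(1) by (auto simp: Bad0_def s_def L_def q_def)
      show "0 \<le> 1 / samp_prob R n Cd k eps i" for i using p01[of i] by (simp add: p_def)
      fix v assume vC: "v \<in> Cd"
      from that(2)[OF vC] sumeq[OF vC]
      show "(1 - eps) * real (wt R n v) \<le> (\<Sum>i\<in>{i\<in>g f. v i \<noteq> \<zero>\<^bsub>R\<^esub>}. 1 / samp_prob R n Cd k eps i)"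
        and "(\<Sum>i\<in>{i\<in>g f. v i \<noteq> \<zero>\<^bsub>R\<^esub>}. 1 / samp_prob R n Cd k eps i) \<le> (1 + eps) * real (wt R n v)"
        by (auto simp: BadV_def p_def)
    qed
  qed
  have "UNIV - {f. Good (g f)} \<subseteq> Bad0 \<union> (\<Union>v\<in>Cd. BadV v)" using goodI by blast
  hence "measure_pmf.prob P (UNIV - {f. Good (g f)}) \<le> measure_pmf.prob P (Bad0 \<union> (\<Union>v\<in>Cd. BadV v))"
    by (intro measure_pmf.finite_measure_mono) auto
  also have "\<dots> \<le> measure_pmf.prob P Bad0 + measure_pmf.prob P (\<Union>v\<in>Cd. BadV v)"
    by (intro measure_Un_le) auto
  also have "measure_pmf.prob P (\<Union>v\<in>Cd. BadV v) \<le> (\<Sum>v\<in>Cd. measure_pmf.prob P (BadV v))"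
    by (intro measure_pmf.finite_measure_subadditive_finite fCd) auto
  finally have "measure_pmf.prob P (UNIV - {f. Good (g f)}) < 1"
    using pBad0 sumV by linarith
  hence pos: "0 < measure_pmf.prob P {f. Good (g f)}"
    using measure_pmf.prob_compl[of "{f. Good (g f)}" P] by simp
  have sp: "sample_pmf R n Cd k eps = map_pmf g P"
  proof -
    have "g = (\<lambda>f. {i\<in>A. f i})" by (simp add: g_def fun_eq_iff)
    thus ?thesis by (simp add: sample_pmf_def P_def A_def p_def)
  qed
  have pos2: "0 < measure_pmf.prob (sample_pmf R n Cd k eps) {S. Good S}"
    using pos by (simp add: sp)
  then obtain S where "S \<in> set_pmf (sample_pmf R n Cd k eps)" "Good S"
    using measure_pmf_zero_iff[of "sample_pmf R n Cd k eps" "{S. Good S}"] by force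
  hence "\<exists>S w'. is_sparsifier R n Cd eps
                 (40 * real k ^ 2 * log 2 (real (card (carrier R))) / eps\<^sup>2) S w'"
    unfolding Good_def by blast
  moreover have "measure_pmf.prob (sample_pmf R n Cd k eps)
         {S. is_sparsifier R n Cd eps
               (40 * real k ^ 2 * log 2 (real (card (carrier R))) / eps\<^sup>2) S
               (\<lambda>i. 1 / samp_prob R n Cd k eps i)} > 0"
    using pos2 unfolding Good_def by simp
  ultimately show "(\<exists>S w'. is_sparsifier R n Cd eps
                 (40 * real k ^ 2 * log 2 (real (card (carrier R))) / eps\<^sup>2) S w') \<and>
       measure_pmf.prob (sample_pmf R n Cd k eps)
         {S. is_sparsifier R n Cd eps
               (40 * real k ^ 2 * log 2 (real (card (carrier R))) / eps\<^sup>2) S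
               (\<lambda>i. 1 / samp_prob R n Cd k eps i)} > 0" by blast
qed


end
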